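(* Let $T\ge1$ and consider the MDP with states $\{1,2\}$ defined as follows. In state 1 there are two actions: action "up" gives reward $1$ and moves to state 1 with probability $1-\frac1T$ and to state 2 with probability $\frac1T$; action "down" gives reward $\frac12$ and moves to state 2 deterministically. In state 2 there is a single action, giving reward $\frac12$ and staying in state 2. Then $\|h^\star\|_{\mathrm{sp}}=\frac T2$ and $\inf_{\pi:\rho^\pi=\rho^\star}\|h^\pi\|_{\mathrm{sp}}=0$.
   Context: Policies are stationary Markovian. Gain $\rho^\pi(s)=\lim_T\frac1T\mathbb{E}^\pi_s[\sum_{t<T}r(S_t,A_t)]$, $\rho^\star=\sup_\pi\rho^\pi$; bias $h^\pi(s)=\mathrm{C}\text{-}\lim_T\mathbb{E}^\pi_s[\sum_{t<T}(r(S_t,A_t)-\rho^\pi(S_t))]$; $h^\star$ is the bias of a Blackwell-optimal policy (a policy optimal for the $\gamma$-discounted problem for all $\gamma$ sufficiently close to 1). $\|x\|_{\mathrm{sp}}=\max x-\min x$. *)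

theory Defs
  imports Complex_Main
begin

text \<open>Generic finite MDP: state set S, admissible actions A s, reward r s a,
transition probabilities P s a s'. A stationary Markovian (possibly randomized)
policy \<pi> assigns to each state s a probability distribution \<pi> s over A s.\<close>

definition is_policy :: "'s set \<Rightarrow> ('s \<Rightarrow> 'a set) \<Rightarrow> ('s \<Rightarrow> 'a \<Rightarrow> real) \<Rightarrow> bool" where
  "is_policy S A \<pi> \<longleftrightarrow> (\<forall>s\<in>S. (\<forall>a\<in>A s. 0 \<le> \<pi> s a) \<and> (\<Sum>a\<in>A s. \<pi> s a) = 1)"

definition Ppi :: "('s \<Rightarrow> 'a set) \<Rightarrow> ('s \<Rightarrow> 'a \<Rightarrow> 's \<Rightarrow> real) \<Rightarrow> ('s \<Rightarrow> 'a \<Rightarrow> real) \<Rightarrow> 's \<Rightarrow> 's \<Rightarrow> real" where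
  "Ppi A P \<pi> s s' = (\<Sum>a\<in>A s. \<pi> s a * P s a s')"

definition rpi :: "('s \<Rightarrow> 'a set) \<Rightarrow> ('s \<Rightarrow> 'a \<Rightarrow> real) \<Rightarrow> ('s \<Rightarrow> 'a \<Rightarrow> real) \<Rightarrow> 's \<Rightarrow> real" where
  "rpi A r \<pi> s = (\<Sum>a\<in>A s. \<pi> s a * r s a)"

text \<open>nstep ... n s u = Pr^pi_s[S_n = u]\<close>
primrec nstep :: "'s set \<Rightarrow> ('s \<Rightarrow> 'a set) \<Rightarrow> ('s \<Rightarrow> 'a \<Rightarrow> 's \<Rightarrow> real) \<Rightarrow> ('s \<Rightarrow> 'a \<Rightarrow> real) \<Rightarrow> nat \<Rightarrow> 's \<Rightarrow> 's \<Rightarrow> real" where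
  "nstep S A P \<pi> 0 s u = (if u = s then 1 else 0)"
| "nstep S A P \<pi> (Suc n) s u = (\<Sum>v\<in>S. nstep S A P \<pi> n s v * Ppi A P \<pi> v u)"

text \<open>E^pi_s[r(S_t,A_t)]\<close>
definition exp_reward :: "'s set \<Rightarrow> ('s \<Rightarrow> 'a set) \<Rightarrow> ('s \<Rightarrow> 'a \<Rightarrow> real) \<Rightarrow> ('s \<Rightarrow> 'a \<Rightarrow> 's \<Rightarrow> real) \<Rightarrow> ('s \<Rightarrow> 'a \<Rightarrow> real) \<Rightarrow> nat \<Rightarrow> 's \<Rightarrow> real" where
  "exp_reward S A r P \<pi> t s = (\<Sum>u\<in>S. nstep S A P \<pi> t s u * rpi A r \<pi> u)"

definition gain :: "'s set \<Rightarrow> ('s \<Rightarrow> 'a set) \<Rightarrow> ('s \<Rightarrow> 'a \<Rightarrow> real) \<Rightarrow> ('s \<Rightarrow> 'a \<Rightarrow> 's \<Rightarrow> real) \<Rightarrow> ('s \<Rightarrow> 'a \<Rightarrow> real) \<Rightarrow> 's \<Rightarrow> real" where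
  "gain S A r P \<pi> s = lim (\<lambda>T. (\<Sum>t<T. exp_reward S A r P \<pi> t s) / real T)"

text \<open>optimal gain rho^*(s) = sup over stationary Markovian policies\<close>
definition opt_gain :: "'s set \<Rightarrow> ('s \<Rightarrow> 'a set) \<Rightarrow> ('s \<Rightarrow> 'a \<Rightarrow> real) \<Rightarrow> ('s \<Rightarrow> 'a \<Rightarrow> 's \<Rightarrow> real) \<Rightarrow> 's \<Rightarrow> real" where
  "opt_gain S A r P s = (SUP \<pi>\<in>{\<pi>. is_policy S A \<pi>}. gain S A r P \<pi> s)"

definition cesaro_lim :: "(nat \<Rightarrow> real) \<Rightarrow> real" where
  "cesaro_lim x = lim (\<lambda>N. (\<Sum>n<N. x n) / real N)"

definition bias :: "'s set \<Rightarrow> ('s \<Rightarrow> 'a set) \<Rightarrow> ('s \<Rightarrow> 'a \<Rightarrow> real) \<Rightarrow> ('s \<Rightarrow> 'a \<Rightarrow> 's \<Rightarrow> real) \<Rightarrow> ('s \<Rightarrow> 'a \<Rightarrow> real) \<Rightarrow> 's \<Rightarrow> real" where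
  "bias S A r P \<pi> s = cesaro_lim (\<lambda>T. \<Sum>t<T. exp_reward S A r P \<pi> t s
      - (\<Sum>u\<in>S. nstep S A P \<pi> t s u * gain S A r P \<pi> u))"

definition disc_value :: "'s set \<Rightarrow> ('s \<Rightarrow> 'a set) \<Rightarrow> ('s \<Rightarrow> 'a \<Rightarrow> real) \<Rightarrow> ('s \<Rightarrow> 'a \<Rightarrow> 's \<Rightarrow> real) \<Rightarrow> real \<Rightarrow> ('s \<Rightarrow> 'a \<Rightarrow> real) \<Rightarrow> 's \<Rightarrow> real" where
  "disc_value S A r P \<gamma> \<pi> s = (\<Sum>t. \<gamma> ^ t * exp_reward S A r P \<pi> t s)"

definition blackwell_optimal :: "'s set \<Rightarrow> ('s \<Rightarrow> 'a set) \<Rightarrow> ('s \<Rightarrow> 'a \<Rightarrow> real) \<Rightarrow> ('s \<Rightarrow> 'a \<Rightarrow> 's \<Rightarrow> real) \<Rightarrow> ('s \<Rightarrow> 'a \<Rightarrow> real) \<Rightarrow> bool" where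
  "blackwell_optimal S A r P \<pi> \<longleftrightarrow> is_policy S A \<pi> \<and>
     (\<exists>\<gamma>0<1. \<forall>\<gamma>. \<gamma>0 < \<gamma> \<and> \<gamma> < 1 \<longrightarrow>
        (\<forall>\<pi>'. is_policy S A \<pi>' \<longrightarrow> (\<forall>s\<in>S. disc_value S A r P \<gamma> \<pi>' s \<le> disc_value S A r P \<gamma> \<pi> s)))"

definition span :: "'s set \<Rightarrow> ('s \<Rightarrow> real) \<Rightarrow> real" where
  "span S f = Max (f ` S) - Min (f ` S)"

text \<open>The concrete two-state MDP. States 1, 2. In state 1: action 0 = "up",
action 1 = "down". In state 2: single action 0.\<close>
definition exS :: "nat set" where "exS = {1, 2}"

definition exA :: "nat \<Rightarrow> nat set" where
  "exA s = (if s = 1 then {0, 1} else {0})"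

definition exr :: "nat \<Rightarrow> nat \<Rightarrow> real" where
  "exr s a = (if s = 1 \<and> a = 0 then 1 else 1/2)"

definition exP :: "real \<Rightarrow> nat \<Rightarrow> nat \<Rightarrow> nat \<Rightarrow> real" where
  "exP T s a s' =
     (if s = 1 \<and> a = 0 then (if s' = 1 then 1 - 1/T else if s' = 2 then 1/T else 0)
      else (if s' = 2 then 1 else 0))"

end

theory Submission imports Defs begin

lemma avg_lemma:
  fixes q c d :: real
  assumes "0 \<le> q" "q < 1"
  shows "(\<lambda>N. (\<Sum>t<N. c + d * q ^ t) / real N) \<longlonglongrightarrow> c"
proof -
  have sm: "summable (\<lambda>t. q ^ t)" using assms by (simp add: summable_geometric)
  have L1: "(\<lambda>N. \<Sum>t<N. q ^ t) \<longlonglongrightarrow> (\<Sum>t. q ^ t)" using summable_LIMSEQ[OF sm] .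
  have L2: "(\<lambda>N. c + d * ((\<Sum>t<N. q ^ t) * inverse (real N))) \<longlonglongrightarrow> c + d * ((\<Sum>t. q ^ t) * 0)"
    by (intro tendsto_intros L1 lim_inverse_n)
  have ev: "\<forall>\<^sub>F N in sequentially. c + d * ((\<Sum>t<N. q ^ t) * inverse (real N)) = (\<Sum>t<N. c + d * q ^ t) / real N"
    using eventually_gt_at_top[of "0::nat"]
    by eventually_elim (simp add: sum.distrib sum_distrib_left[symmetric] field_simps)
  show ?thesis using Lim_transform_eventually[OF L2[simplified] ev] .
qed

lemma pol:
  assumes "is_policy exS exA \<pi>"
  shows "\<pi> 2 0 = 1" "\<pi> 1 1 = 1 - \<pi> 1 0" "0 \<le> \<pi> 1 0" "\<pi> 1 0 \<le> 1"
  using assms unfolding is_policy_def exS_def exA_def by auto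

lemma Ppi_vals:
  assumes "is_policy exS exA \<pi>"
  shows "Ppi exA (exP T) \<pi> 1 1 = \<pi> 1 0 * (1 - 1/T)"
    "Ppi exA (exP T) \<pi> 1 2 = 1 - \<pi> 1 0 * (1 - 1/T)"
    "Ppi exA (exP T) \<pi> 2 1 = 0"
    "Ppi exA (exP T) \<pi> 2 2 = 1"
  using pol[OF assms] unfolding Ppi_def exA_def exP_def by (auto simp: algebra_simps)

lemma nstep_vals:
  fixes T :: real
  assumes "is_policy exS exA \<pi>"
  defines "q \<equiv> \<pi> 1 0 * (1 - 1/T)"
  shows "nstep exS exA (exP T) \<pi> n 1 1 = q ^ n \<and> nstep exS exA (exP T) \<pi> n 1 2 = 1 - q ^ n
     \<and> nstep exS exA (exP T) \<pi> n 2 1 = 0 \<and> nstep exS exA (exP T) \<pi> n 2 2 = 1"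
proof (induction n)
  case 0 then show ?case by simp
next
  case (Suc n)
  have sp: "nstep exS exA (exP T) \<pi> (Suc n) s u = nstep exS exA (exP T) \<pi> n s 1 * Ppi exA (exP T) \<pi> 1 u
     + nstep exS exA (exP T) \<pi> n s 2 * Ppi exA (exP T) \<pi> 2 u" for s u
    by (simp add: exS_def)
  show ?case unfolding sp using Suc.IH unfolding Ppi_vals[OF assms(1), of T] q_def[symmetric]
    by (simp add: algebra_simps)
qed

lemma nstep_vals':
  fixes T :: real
  assumes "is_policy exS exA \<pi>"
  shows "nstep exS exA (exP T) \<pi> n 1 1 = (\<pi> 1 0 * (1 - 1/T)) ^ n"
    "nstep exS exA (exP T) \<pi> n 1 2 = 1 - (\<pi> 1 0 * (1 - 1/T)) ^ n"
    "nstep exS exA (exP T) \<pi> n 2 1 = 0" "nstep exS exA (exP T) \<pi> n 2 2 = 1"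
  using nstep_vals[OF assms, of T n] by auto

lemma rpi_vals:
  assumes "is_policy exS exA \<pi>"
  shows "rpi exA exr \<pi> 1 = 1/2 + \<pi> 1 0 / 2" "rpi exA exr \<pi> 2 = 1/2"
  using pol[OF assms] unfolding rpi_def exA_def exr_def by (auto simp: algebra_simps)

lemma exp_vals:
  assumes "is_policy exS exA \<pi>"
  shows "exp_reward exS exA exr (exP T) \<pi> t 1 = 1/2 + \<pi> 1 0 / 2 * (\<pi> 1 0 * (1 - 1/T)) ^ t"
    "exp_reward exS exA exr (exP T) \<pi> t 2 = 1/2"
proof -
  have sp: "exp_reward exS exA exr (exP T) \<pi> t s = nstep exS exA (exP T) \<pi> t s 1 * rpi exA exr \<pi> 1
     + nstep exS exA (exP T) \<pi> t s 2 * rpi exA exr \<pi> 2" for s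
    by (simp add: exp_reward_def exS_def)
  show "exp_reward exS exA exr (exP T) \<pi> t 1 = 1/2 + \<pi> 1 0 / 2 * (\<pi> 1 0 * (1 - 1/T)) ^ t"
    unfolding sp nstep_vals'[OF assms, of T t] rpi_vals[OF assms] by (simp add: algebra_simps)
  show "exp_reward exS exA exr (exP T) \<pi> t 2 = 1/2"
    unfolding sp nstep_vals'[OF assms, of T t] rpi_vals[OF assms] by (simp add: algebra_simps)
qed

lemma geom_ok:
  fixes T :: real
  assumes "T \<ge> 1" "is_policy exS exA \<pi>"
  shows "0 \<le> \<pi> 1 0 * (1 - 1/T)" "\<pi> 1 0 * (1 - 1/T) < 1"
proof -
  have a: "0 \<le> 1 - 1/T" "1 - 1/T < 1" using assms(1) by (auto simp: field_simps)
  show "0 \<le> \<pi> 1 0 * (1 - 1/T)" using a pol[OF assms(2)] by simp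
  have "\<pi> 1 0 * (1 - 1/T) \<le> 1 - 1/T" using a pol[OF assms(2)] by (simp add: mult_left_le_one_le)
  then show "\<pi> 1 0 * (1 - 1/T) < 1" using a by linarith
qed

lemma gain_vals:
  fixes T :: real
  assumes "T \<ge> 1" "is_policy exS exA \<pi>"
  shows "gain exS exA exr (exP T) \<pi> 1 = 1/2" "gain exS exA exr (exP T) \<pi> 2 = 1/2"
proof -
  note g = geom_ok[OF assms]
  show "gain exS exA exr (exP T) \<pi> 1 = 1/2"
    unfolding gain_def exp_vals[OF assms(2)]
    by (rule limI, rule avg_lemma[OF g])
  show "gain exS exA exr (exP T) \<pi> 2 = 1/2"
    unfolding gain_def exp_vals[OF assms(2)]
    using avg_lemma[of 0 "1/2" 0] by (intro limI) simp
qed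

lemma bias_vals:
  fixes T :: real
  assumes "T \<ge> 1" "is_policy exS exA \<pi>"
  shows "bias exS exA exr (exP T) \<pi> 1 = (\<pi> 1 0 / 2) / (1 - \<pi> 1 0 * (1 - 1/T))"
    "bias exS exA exr (exP T) \<pi> 2 = 0"
proof -
  note g = geom_ok[OF assms]
  define q where "q = \<pi> 1 0 * (1 - 1/T)"
  define a where "a = (\<pi> 1 0 / 2) / (1 - q)"
  have q1: "q < 1" "0 \<le> q" using g q_def by auto
  have e: "(\<Sum>t<N. exp_reward exS exA exr (exP T) \<pi> t 1
      - (\<Sum>u\<in>exS. nstep exS exA (exP T) \<pi> t 1 u * gain exS exA exr (exP T) \<pi> u))
     = a + (-a) * q ^ N" for N
  proof -
    have "(\<Sum>t<N. exp_reward exS exA exr (exP T) \<pi> t 1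
      - (\<Sum>u\<in>exS. nstep exS exA (exP T) \<pi> t 1 u * gain exS exA exr (exP T) \<pi> u))
      = (\<Sum>t<N. \<pi> 1 0 / 2 * q ^ t)"
    proof (rule sum.cong[OF refl])
      fix t
      have sp: "(\<Sum>u\<in>exS. nstep exS exA (exP T) \<pi> t 1 u * gain exS exA exr (exP T) \<pi> u)
        = nstep exS exA (exP T) \<pi> t 1 1 * gain exS exA exr (exP T) \<pi> 1 + nstep exS exA (exP T) \<pi> t 1 2 * gain exS exA exr (exP T) \<pi> 2"
        by (simp add: exS_def)
      show "exp_reward exS exA exr (exP T) \<pi> t 1
      - (\<Sum>u\<in>exS. nstep exS exA (exP T) \<pi> t 1 u * gain exS exA exr (exP T) \<pi> u) = \<pi> 1 0 / 2 * q ^ t"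
        unfolding sp nstep_vals'[OF assms(2)] gain_vals[OF assms] exp_vals[OF assms(2)] q_def by (simp add: algebra_simps)
    qed
    also have "\<dots> = \<pi> 1 0 / 2 * ((1 - q ^ N) / (1 - q))"
    proof -
      have "(\<Sum>t<N. q^t) = (1-q^N)/(1-q)" using q1 sum_gp_strict[of q N] by simp
      then show ?thesis unfolding sum_distrib_left[symmetric] by simp
    qed
    also have "\<dots> = a + (-a) * q ^ N"
    proof -
      show ?thesis unfolding a_def by (simp add: diff_divide_distrib right_diff_distrib)
    qed
    finally show ?thesis .
  qed
  show "bias exS exA exr (exP T) \<pi> 1 = (\<pi> 1 0 / 2) / (1 - \<pi> 1 0 * (1 - 1/T))"
    unfolding bias_def cesaro_lim_def e a_def[symmetric] q_def[symmetric]
    by (rule limI, rule avg_lemma[OF q1(2) q1(1)])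
  show "bias exS exA exr (exP T) \<pi> 2 = 0"
  proof -
    have sp: "(\<Sum>u\<in>exS. nstep exS exA (exP T) \<pi> t 2 u * gain exS exA exr (exP T) \<pi> u)
        = nstep exS exA (exP T) \<pi> t 2 1 * gain exS exA exr (exP T) \<pi> 1 + nstep exS exA (exP T) \<pi> t 2 2 * gain exS exA exr (exP T) \<pi> 2" for t
        by (simp add: exS_def)
    show ?thesis
    unfolding bias_def cesaro_lim_def sp nstep_vals'[OF assms(2)] gain_vals[OF assms] exp_vals[OF assms(2)]
    using avg_lemma[of 0 0 0] by (simp add: limI)
  qed
qed

lemma disc_vals:
  fixes T :: real
  assumes "T \<ge> 1" "is_policy exS exA \<pi>" "0 \<le> \<gamma>" "\<gamma> < 1"
  shows "disc_value exS exA exr (exP T) \<gamma> \<pi> 1 = (1/2) / (1 - \<gamma>) + (\<pi> 1 0 / 2) / (1 - \<gamma> * (\<pi> 1 0 * (1 - 1/T)))"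
    "disc_value exS exA exr (exP T) \<gamma> \<pi> 2 = (1/2) / (1 - \<gamma>)"
proof -
  note g = geom_ok[OF assms(1,2)]
  define q where "q = \<pi> 1 0 * (1 - 1/T)"
  have q1: "q < 1" "0 \<le> q" using g q_def by auto
  have "\<gamma> * q \<le> q" using q1 assms(3,4) by (simp add: mult_left_le_one_le)
  then have gq: "\<gamma> * q < 1" "0 \<le> \<gamma> * q" using q1 assms(3,4) by auto
  have s1: "(\<lambda>t. (1/2) * \<gamma> ^ t) sums ((1/2) * (1 / (1 - \<gamma>)))"
    using assms(3,4) by (intro sums_mult geometric_sums) simp
  have s2: "(\<lambda>t. (\<pi> 1 0 / 2) * (\<gamma> * q) ^ t) sums ((\<pi> 1 0 / 2) * (1 / (1 - \<gamma> * q)))"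
    using gq by (intro sums_mult geometric_sums) simp
  have "(\<lambda>t. \<gamma> ^ t * exp_reward exS exA exr (exP T) \<pi> t 1) sums ((1/2) * (1 / (1 - \<gamma>)) + (\<pi> 1 0 / 2) * (1 / (1 - \<gamma> * q)))"
  proof -
    have "(\<lambda>t. \<gamma> ^ t * exp_reward exS exA exr (exP T) \<pi> t 1) = (\<lambda>t. (1/2) * \<gamma> ^ t + (\<pi> 1 0 / 2) * (\<gamma> * q) ^ t)"
      unfolding exp_vals[OF assms(2)] q_def[symmetric] by (rule ext) (simp add: power_mult_distrib algebra_simps)
    then show ?thesis using sums_add[OF s1 s2] by simp
  qed
  then show "disc_value exS exA exr (exP T) \<gamma> \<pi> 1 = (1/2) / (1 - \<gamma>) + (\<pi> 1 0 / 2) / (1 - \<gamma> * (\<pi> 1 0 * (1 - 1/T)))"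
    unfolding disc_value_def q_def by (simp add: sums_iff)
  have "(\<lambda>t. \<gamma> ^ t * exp_reward exS exA exr (exP T) \<pi> t 2) sums ((1/2) * (1 / (1 - \<gamma>)))"
    using s1 by (simp add: exp_vals[OF assms(2)] algebra_simps)
  then show "disc_value exS exA exr (exP T) \<gamma> \<pi> 2 = (1/2) / (1 - \<gamma>)"
    unfolding disc_value_def by (simp add: sums_iff)
qed

lemma key_mono:
  fixes p c g :: real
  assumes "0 \<le> p" "p \<le> 1" "0 \<le> c" "c < 1" "0 \<le> g" "g < 1"
  shows "(p/2)/(1 - g*(p*c)) \<le> (1/2)/(1 - g*(1*c))"
    "p < 1 \<Longrightarrow> (p/2)/(1 - g*(p*c)) < (1/2)/(1 - g*(1*c))"
proof -
  have gc: "g*c < 1" "0 \<le> g*c" using assms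
    by (auto simp: mult_left_le_one_le intro: le_less_trans[of "g*c" c 1])
  have "g*(p*c) \<le> g*c" using assms by (simp add: mult_left_le_one_le mult_left_mono)
  then have d1: "1 - g*(p*c) > 0" using gc by linarith
  have d2: "1 - g*(1*c) > 0" using gc by simp
  have "p*(1 - g*c) \<le> 1 - g*(p*c)" using assms gc by (simp add: algebra_simps)
  then show "(p/2)/(1 - g*(p*c)) \<le> (1/2)/(1 - g*(1*c))" using d1 d2
    by (simp add: divide_simps algebra_simps)
  assume "p < 1"
  then have "p*(1 - g*c) < 1 - g*(p*c)" using assms gc by (simp add: algebra_simps)
  then show "(p/2)/(1 - g*(p*c)) < (1/2)/(1 - g*(1*c))" using d1 d2
    by (simp add: divide_simps algebra_simps)
qed

definition upp :: "nat \<Rightarrow> nat \<Rightarrow> real" where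
  "upp = (\<lambda>s a. if s = 1 then (if a = 0 then 1 else 0) else 1)"
definition dnp :: "nat \<Rightarrow> nat \<Rightarrow> real" where
  "dnp = (\<lambda>s a. if s = 1 then (if a = 0 then 0 else 1) else 1)"

lemma upp_pol: "is_policy exS exA upp" and dnp_pol: "is_policy exS exA dnp"
  unfolding is_policy_def exS_def exA_def upp_def dnp_def by auto

lemma upp10: "upp 1 0 = 1" and dnp10: "dnp 1 0 = 0"
  unfolding upp_def dnp_def by auto

lemma span_pair: "span exS f = max (f 1) (f 2) - min (f 1) (f 2)"
  unfolding span_def exS_def by simp

theorem theorem27:
  fixes T :: real
  assumes "T \<ge> 1"
  shows "(\<exists>\<pi>. blackwell_optimal exS exA exr (exP T) \<pi>)
    \<and> (\<forall>\<pi>. blackwell_optimal exS exA exr (exP T) \<pi> \<longrightarrow>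
          span exS (bias exS exA exr (exP T) \<pi>) = T / 2)
    \<and> (INF \<pi>\<in>{\<pi>. is_policy exS exA \<pi> \<and>
                  (\<forall>s\<in>exS. gain exS exA exr (exP T) \<pi> s = opt_gain exS exA exr (exP T) s)}.
          span exS (bias exS exA exr (exP T) \<pi>)) = 0"
proof (intro conjI)
  have c: "0 \<le> 1 - 1/T" "1 - 1/T < 1" using assms by (auto simp: field_simps)
  have dominate: "disc_value exS exA exr (exP T) g \<pi>' s \<le> disc_value exS exA exr (exP T) g upp s"
    if "is_policy exS exA \<pi>'" "0 \<le> g" "g < 1" "s \<in> exS" for \<pi>' g s
  proof -
    have "s = 1 \<or> s = 2" using that(4) by (auto simp: exS_def)
    then show ?thesis
    proof
      assume s1: "s = 1"
      show ?thesis
        unfolding s1 disc_vals[OF assms that(1-3)] disc_vals[OF assms upp_pol that(2,3)] upp10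
        using key_mono(1)[OF pol(3,4)[OF that(1)] c that(2,3)] by simp
    next
      assume s2: "s = 2"
      show ?thesis
        unfolding s2 disc_vals[OF assms that(1-3)] disc_vals[OF assms upp_pol that(2,3)] by simp
    qed
  qed
  show "\<exists>\<pi>. blackwell_optimal exS exA exr (exP T) \<pi>"
    unfolding blackwell_optimal_def
    by (rule exI[of _ upp], intro conjI upp_pol exI[of _ 0]) (auto intro: dominate)
  show "\<forall>\<pi>. blackwell_optimal exS exA exr (exP T) \<pi> \<longrightarrow>
          span exS (bias exS exA exr (exP T) \<pi>) = T / 2"
  proof (intro allI impI)
    fix \<pi> assume B: "blackwell_optimal exS exA exr (exP T) \<pi>"
    then have P: "is_policy exS exA \<pi>" unfolding blackwell_optimal_def by blast
    from B obtain g0 where g0: "g0 < 1" "\<forall>\<gamma>. g0 < \<gamma> \<and> \<gamma> < 1 \<longrightarrow>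
        (\<forall>\<pi>'. is_policy exS exA \<pi>' \<longrightarrow> (\<forall>s\<in>exS. disc_value exS exA exr (exP T) \<gamma> \<pi>' s \<le> disc_value exS exA exr (exP T) \<gamma> \<pi> s))"
      unfolding blackwell_optimal_def by blast
    define g where "g = (max g0 0 + 1) / 2"
    have g: "g0 < g" "g < 1" "0 \<le> g" using g0(1) unfolding g_def by auto
    have "disc_value exS exA exr (exP T) g upp 1 \<le> disc_value exS exA exr (exP T) g \<pi> 1"
      using g0(2) g upp_pol by (auto simp: exS_def)
    then have le: "(1/2)/(1 - g*(1*(1-1/T))) \<le> (\<pi> 1 0/2)/(1 - g*(\<pi> 1 0*(1-1/T)))"
      unfolding disc_vals[OF assms P g(3,2)] disc_vals[OF assms upp_pol g(3,2)] upp10 by simp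
    have p1: "\<pi> 1 0 = 1"
    proof (rule ccontr)
      assume "\<pi> 1 0 \<noteq> 1"
      then have "\<pi> 1 0 < 1" using pol(4)[OF P] by simp
      from key_mono(2)[OF pol(3,4)[OF P] c g(3,2) this] le show False by simp
    qed
    have "(1::real) - (1 - 1/T) = 1/T" by simp
    then have b1: "bias exS exA exr (exP T) \<pi> 1 = T/2"
      unfolding bias_vals(1)[OF assms P] p1 using assms by simp
    show "span exS (bias exS exA exr (exP T) \<pi>) = T / 2"
      unfolding span_pair b1 bias_vals(2)[OF assms P] using assms by simp
  qed
  have og: "opt_gain exS exA exr (exP T) s = 1/2" if "s \<in> exS" for s
  proof -
    have "s = 1 \<or> s = 2" using that by (auto simp: exS_def)
    then have "gain exS exA exr (exP T) \<pi> s = 1/2" if "is_policy exS exA \<pi>" for \<pi>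
      using gain_vals[OF assms that] by auto
    then have "opt_gain exS exA exr (exP T) s = (SUP \<pi>\<in>{\<pi>. is_policy exS exA \<pi>}. (1/2::real))"
      unfolding opt_gain_def by (intro SUP_cong) auto
    also have "\<dots> = 1/2" using upp_pol by (intro cSUP_const) auto
    finally show ?thesis .
  qed
  define M where "M = {\<pi>. is_policy exS exA \<pi> \<and>
                  (\<forall>s\<in>exS. gain exS exA exr (exP T) \<pi> s = opt_gain exS exA exr (exP T) s)}"
  have inM: "dnp \<in> M" unfolding M_def
  proof (intro CollectI conjI dnp_pol ballI)
    fix s assume s: "s \<in> exS"
    then have "s = 1 \<or> s = 2" by (auto simp: exS_def)
    then show "gain exS exA exr (exP T) dnp s = opt_gain exS exA exr (exP T) s"
      using og[OF s] gain_vals[OF assms dnp_pol] by auto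
  qed
  have s0: "span exS (bias exS exA exr (exP T) dnp) = 0"
    unfolding span_pair bias_vals[OF assms dnp_pol] dnp10 by simp
  have nn: "0 \<le> span exS (bias exS exA exr (exP T) \<pi>)" for \<pi>
    unfolding span_pair by simp
  show "(INF \<pi>\<in>{\<pi>. is_policy exS exA \<pi> \<and>
                  (\<forall>s\<in>exS. gain exS exA exr (exP T) \<pi> s = opt_gain exS exA exr (exP T) s)}.
          span exS (bias exS exA exr (exP T) \<pi>)) = 0"
    unfolding M_def[symmetric]
    by (rule cInf_eq_minimum) (use inM s0 nn in force)+
qed

end
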